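(* Let $D$ be an open subset of an $n$-dimensional Riemannian manifold, $\{e_1,\dots,e_n\}$ a smooth orthonormal frame on $D$ with dual coframe $\{\theta_i\}$, and $\mathfrak a$ a smooth symmetric Codazzi $(0,2)$-tensor on $D$ with $\mathfrak a(e_i,e_j)=\lambda_i\delta_{ij}$, where $\lambda_1,\dots,\lambda_n$ are pointwise distinct on $D$. Let $X=\sum_i\nabla_{e_i}e_i$, $\Gamma_{ij}^k=\langle\nabla_{e_i}e_j,e_k\rangle$, $\Psi=\sum_{i<j,\,k\neq i,j}(\Gamma_{ii}^k\Gamma_{jj}^k-\Gamma_{ij}^k\Gamma_{ji}^k)$, $\sigma_k=\sigma_k(\lambda_1,\dots,\lambda_n)$, $P(x)=\prod_{i=1}^n(x-\lambda_i)$, and $d\sigma_{n-1}=\sum_k(\sigma_{n-1})_k\theta_k$ (so $\nabla\sigma_{n-1}=\sum_k(\sigma_{n-1})_ke_k$). If $\sigma_k$ is constant on $D$ for every $k\neq n-1$, then (i) $\Gamma_{ii}^k=b_{ik}(\sigma_{n-1})_k$ for $i\neq k$; (ii) $\langle X,\nabla\sigma_{n-1}\rangle=\sum_{k=1}^n u_k(\sigma_{n-1})_k^2$; (iii) $\Psi=\frac12\sum_{k=1}^nG(k)(\sigma_{n-1})_k^2$, where $b_{ik}=\dfrac{(-1)^n\lambda_i}{(\lambda_i-\lambda_k)P'(\lambda_i)}$ for $i\neq k$, $u_k=\sum_{i\neq k}b_{ik}$, and $G(k)=\sum_{i\neq j,\;i,j\neq k}b_{ik}b_{jk}$.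
   Context: $\mathfrak a$ is Codazzi if $(\nabla_X\mathfrak a)(Y,Z)=(\nabla_Y\mathfrak a)(X,Z)$ for all vector fields $X,Y,Z$. $\nabla$ is the Levi-Civita connection. *)

theory Defs
  imports "HOL-Analysis.Analysis" "HOL-Computational_Algebra.Polynomial"
begin

text \<open>Local model: D is an open subset of a coordinate domain in R^n (points real^'n),
  carrying a Riemannian metric g given by its coefficient matrix field g p.
  Vector fields are given by their coordinate components.\<close>

definition dderiv :: "(real^'n \<Rightarrow> real) \<Rightarrow> real^'n \<Rightarrow> real^'n \<Rightarrow> real" where
  "dderiv f p v = frechet_derivative f (at p) v"

definition partial :: "'n \<Rightarrow> (real^'n \<Rightarrow> real) \<Rightarrow> real^'n \<Rightarrow> real" where
  "partial j f p = frechet_derivative f (at p) (axis j 1)"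

text \<open>C-infinity functions on D: differentiable on D with all partial derivatives
  again C-infinity (coinductively, i.e. derivatives of all orders exist).\<close>
coinductive smooth_fun :: "(real^'n) set \<Rightarrow> (real^'n \<Rightarrow> real) \<Rightarrow> bool" for D where
  "f differentiable_on D \<Longrightarrow> (\<And>j. smooth_fun D (partial j f)) \<Longrightarrow> smooth_fun D f"

definition smooth_vf :: "(real^'n) set \<Rightarrow> (real^'n \<Rightarrow> real^'n) \<Rightarrow> bool" where
  "smooth_vf D V \<longleftrightarrow> (\<forall>c. smooth_fun D (\<lambda>p. V p $ c))"

definition smooth_mf :: "(real^'n) set \<Rightarrow> (real^'n \<Rightarrow> real^'n^'n) \<Rightarrow> bool" where
  "smooth_mf D M \<longleftrightarrow> (\<forall>a b. smooth_fun D (\<lambda>p. M p $ a $ b))"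

definition riem_metric :: "(real^'n) set \<Rightarrow> (real^'n \<Rightarrow> real^'n^'n) \<Rightarrow> bool" where
  "riem_metric D g \<longleftrightarrow> open D \<and> smooth_mf D g \<and>
     (\<forall>p\<in>D. transpose (g p) = g p \<and> (\<forall>v. v \<noteq> 0 \<longrightarrow> v \<bullet> (g p *v v) > 0))"

definition tform :: "(real^'n \<Rightarrow> real^'n^'n) \<Rightarrow> real^'n \<Rightarrow> real^'n \<Rightarrow> real^'n \<Rightarrow> real" where
  "tform M p u v = u \<bullet> (M p *v v)"

definition christoffel :: "(real^'n \<Rightarrow> real^'n^'n) \<Rightarrow> 'n \<Rightarrow> 'n \<Rightarrow> 'n \<Rightarrow> real^'n \<Rightarrow> real" where
  "christoffel g c a b p = (1/2) * (\<Sum>d\<in>UNIV. matrix_inv (g p) $ c $ d *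
      (partial a (\<lambda>q. g q $ b $ d) p + partial b (\<lambda>q. g q $ a $ d) p
       - partial d (\<lambda>q. g q $ a $ b) p))"

definition lc_conn :: "(real^'n \<Rightarrow> real^'n^'n) \<Rightarrow> (real^'n \<Rightarrow> real^'n) \<Rightarrow> (real^'n \<Rightarrow> real^'n)
     \<Rightarrow> real^'n \<Rightarrow> real^'n" where
  "lc_conn g X Y p = (\<chi> c. dderiv (\<lambda>q. Y q $ c) p (X p)
       + (\<Sum>a\<in>UNIV. \<Sum>b\<in>UNIV. christoffel g c a b p * X p $ a * Y p $ b))"

definition cov_tensor :: "(real^'n \<Rightarrow> real^'n^'n) \<Rightarrow> (real^'n \<Rightarrow> real^'n^'n)
    \<Rightarrow> (real^'n \<Rightarrow> real^'n) \<Rightarrow> (real^'n \<Rightarrow> real^'n) \<Rightarrow> (real^'n \<Rightarrow> real^'n) \<Rightarrow> real^'n \<Rightarrow> real" where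
  "cov_tensor g A X Y Z p = dderiv (\<lambda>q. tform A q (Y q) (Z q)) p (X p)
      - tform A p (lc_conn g X Y p) (Z p) - tform A p (Y p) (lc_conn g X Z p)"

definition codazzi :: "(real^'n) set \<Rightarrow> (real^'n \<Rightarrow> real^'n^'n) \<Rightarrow> (real^'n \<Rightarrow> real^'n^'n) \<Rightarrow> bool" where
  "codazzi D g A \<longleftrightarrow> (\<forall>X Y Z. smooth_vf D X \<and> smooth_vf D Y \<and> smooth_vf D Z \<longrightarrow>
      (\<forall>p\<in>D. cov_tensor g A X Y Z p = cov_tensor g A Y X Z p))"

definition esym :: "nat \<Rightarrow> nat \<Rightarrow> (nat \<Rightarrow> 'a \<Rightarrow> real) \<Rightarrow> 'a \<Rightarrow> real" where
  "esym n k lam p = (\<Sum>S\<in>{S. S \<subseteq> {1..n} \<and> card S = k}. \<Prod>i\<in>S. lam i p)"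

definition charpoly :: "nat \<Rightarrow> (nat \<Rightarrow> 'a \<Rightarrow> real) \<Rightarrow> 'a \<Rightarrow> real poly" where
  "charpoly n lam p = (\<Prod>i\<in>{1..n}. [:- lam i p, 1:])"

definition bcoef :: "nat \<Rightarrow> (nat \<Rightarrow> 'a \<Rightarrow> real) \<Rightarrow> nat \<Rightarrow> nat \<Rightarrow> 'a \<Rightarrow> real" where
  "bcoef n lam i k p = (-1)^n * lam i p /
      ((lam i p - lam k p) * poly (pderiv (charpoly n lam p)) (lam i p))"

definition ucoef :: "nat \<Rightarrow> (nat \<Rightarrow> 'a \<Rightarrow> real) \<Rightarrow> nat \<Rightarrow> 'a \<Rightarrow> real" where
  "ucoef n lam k p = (\<Sum>i\<in>{1..n} - {k}. bcoef n lam i k p)"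

definition Gcoef :: "nat \<Rightarrow> (nat \<Rightarrow> 'a \<Rightarrow> real) \<Rightarrow> nat \<Rightarrow> 'a \<Rightarrow> real" where
  "Gcoef n lam k p = (\<Sum>(i,j)\<in>{(i,j). i \<in> {1..n} \<and> j \<in> {1..n} \<and> i \<noteq> j \<and> i \<noteq> k \<and> j \<noteq> k}.
       bcoef n lam i k p * bcoef n lam j k p)"

definition Gam :: "(real^'n \<Rightarrow> real^'n^'n) \<Rightarrow> (nat \<Rightarrow> real^'n \<Rightarrow> real^'n) \<Rightarrow> nat \<Rightarrow> nat \<Rightarrow> nat
    \<Rightarrow> real^'n \<Rightarrow> real" where
  "Gam g e i j k p = tform g p (lc_conn g (e i) (e j) p) (e k p)"

end

theory Submission imports Defs begin

lemma smooth_fun_diff: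
  assumes "smooth_fun D f" "open D" "p \<in> D"
  shows "f differentiable (at p)"
  using assms by (metis smooth_fun.cases differentiable_on_eq_differentiable_at)

lemma local_has_deriv:
  assumes "open D" "p \<in> D" "\<forall>q\<in>D. f q = h q" "(h has_derivative h') (at p)"
  shows "(f has_derivative h') (at p)"
  using has_derivative_transform_within_open[OF assms(4) assms(1) assms(2)] assms(3) by metis

lemma dderiv_eq:
  assumes "(f has_derivative f') (at p)"
  shows "dderiv f p v = f' v"
  using frechet_derivative_at[OF assms] unfolding dderiv_def by simp

lemma dderiv_const:
  assumes "open D" "p \<in> D" "\<forall>q\<in>D. f q = c"
  shows "dderiv f p v = 0"
proof -
  have "(f has_derivative (\<lambda>_. 0)) (at p)"
    using local_has_deriv[OF assms(1,2), of f "\<lambda>_. c"] assms(3) by simp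
  then show ?thesis by (rule dderiv_eq)
qed

lemma tform_expand: "tform M p u w = (\<Sum>a\<in>UNIV. \<Sum>b\<in>UNIV. u$a * M p$a$b * w$b)"
  unfolding tform_def inner_vec_def matrix_vector_mult_def
  by (simp add: sum_distrib_left mult.assoc)

definition vd :: "(real^'n \<Rightarrow> real^'n) \<Rightarrow> real^'n \<Rightarrow> real^'n \<Rightarrow> real^'n" where
  "vd Y p v = (\<chi> c. dderiv (\<lambda>q. Y q $ c) p v)"

lemma tform_deriv:
  assumes Y: "\<And>a. (\<lambda>q. Y q $ a) differentiable (at p)"
    and Z: "\<And>a. (\<lambda>q. Z q $ a) differentiable (at p)"
    and M: "\<And>a b. (\<lambda>q. M q $ a $ b) differentiable (at p)"
  shows "((\<lambda>q. tform M q (Y q) (Z q)) has_derivative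
     (\<lambda>v. tform M p (vd Y p v) (Z p)
        + (\<Sum>a\<in>UNIV. \<Sum>b\<in>UNIV. Y p $ a * dderiv (\<lambda>q. M q $ a $ b) p v * Z p $ b)
        + tform M p (Y p) (vd Z p v))) (at p)"
proof -
  have dY: "\<And>a. ((\<lambda>q. Y q $ a) has_derivative dderiv (\<lambda>q. Y q $ a) p) (at p)"
    using Y unfolding dderiv_def by (metis frechet_derivative_works)
  have dZ: "\<And>a. ((\<lambda>q. Z q $ a) has_derivative dderiv (\<lambda>q. Z q $ a) p) (at p)"
    using Z unfolding dderiv_def by (metis frechet_derivative_works)
  have dM: "\<And>a b. ((\<lambda>q. M q $ a $ b) has_derivative dderiv (\<lambda>q. M q $ a $ b) p) (at p)"
    using M unfolding dderiv_def by (metis frechet_derivative_works)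
  have "((\<lambda>q. \<Sum>a\<in>UNIV. \<Sum>b\<in>UNIV. Y q $ a * M q $ a $ b * Z q $ b) has_derivative
     (\<lambda>v. \<Sum>a\<in>UNIV. \<Sum>b\<in>UNIV. 
        Y p $ a * M p $ a $ b * dderiv (\<lambda>q. Z q $ b) p v + 
        (Y p $ a * dderiv (\<lambda>q. M q $ a $ b) p v + dderiv (\<lambda>q. Y q $ a) p v * M p $ a $ b) * Z p $ b)) (at p)"
    by (intro has_derivative_sum has_derivative_mult dY dZ dM)
  then show ?thesis
    unfolding tform_expand[abs_def]
    apply (rule has_derivative_eq_rhs)
    apply (rule ext)
    apply (simp add: vd_def algebra_simps sum.distrib)
    done
qed

lemma sym_mat_inner:
  fixes G :: "real^'n^'n"
  assumes "transpose G = G"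
  shows "u \<bullet> (G *v v) = (G *v u) \<bullet> v"
proof -
  have "u \<bullet> (G *v v) = (u v* G) \<bullet> v" by (simp add: dot_lmul_matrix)
  also have "u v* G = G *v u" by (metis assms vector_transpose_matrix)
  finally show ?thesis .
qed

lemma swap3: "(\<Sum>d\<in>D. \<Sum>a\<in>A. \<Sum>b\<in>B. f a b d) = (\<Sum>a\<in>A. \<Sum>b\<in>B. \<Sum>d\<in>D. f a b d)"
proof -
  have "(\<Sum>d\<in>D. \<Sum>a\<in>A. \<Sum>b\<in>B. f a b d) = (\<Sum>a\<in>A. \<Sum>d\<in>D. \<Sum>b\<in>B. f a b d)"
    by (rule sum.swap)
  also have "\<dots> = (\<Sum>a\<in>A. \<Sum>b\<in>B. \<Sum>d\<in>D. f a b d)"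
    by (rule sum.cong[OF refl], rule sum.swap)
  finally show ?thesis .
qed

lemma swap3b: "(\<Sum>a\<in>A. \<Sum>d\<in>D. \<Sum>b\<in>B. f a b d) = (\<Sum>a\<in>A. \<Sum>b\<in>B. \<Sum>d\<in>D. f a b d)"
  by (rule sum.cong[OF refl], rule sum.swap)

lemma chr_alg:
  fixes G Gi :: "real^'n^'n" and Dg :: "'n \<Rightarrow> 'n \<Rightarrow> 'n \<Rightarrow> real" and x y z :: "real^'n"
  assumes GGi: "G ** Gi = mat 1" and Gs: "transpose G = G" and Ds: "\<And>c a b. Dg c a b = Dg c b a"
  shows "(\<chi> c. \<Sum>a\<in>UNIV. \<Sum>b\<in>UNIV. ((1/2) * (\<Sum>d\<in>UNIV. Gi$c$d * (Dg a b d + Dg b a d - Dg d a b))) * x$a * y$b) \<bullet> (G *v z)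
       + y \<bullet> (G *v (\<chi> c. \<Sum>a\<in>UNIV. \<Sum>b\<in>UNIV. ((1/2) * (\<Sum>d\<in>UNIV. Gi$c$d * (Dg a b d + Dg b a d - Dg d a b))) * x$a * z$b))
     = (\<Sum>a\<in>UNIV. \<Sum>b\<in>UNIV. y$a * (\<Sum>c\<in>UNIV. x$c * Dg c a b) * z$b)"
proof -
  define T where "T = (\<lambda>a b d. Dg a b d + Dg b a d - Dg d a b)"
  define w1 where "w1 = (\<chi> d. (1/2) * (\<Sum>a\<in>UNIV. \<Sum>b\<in>UNIV. T a b d * x$a * y$b))"
  define w2 where "w2 = (\<chi> d. (1/2) * (\<Sum>a\<in>UNIV. \<Sum>b\<in>UNIV. T a b d * x$a * z$b))"
  have gen: "(\<chi> c. \<Sum>a\<in>UNIV. \<Sum>b\<in>UNIV. ((1/2) * (\<Sum>d\<in>UNIV. Gi$c$d * T a b d)) * x$a * u$b)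
     = Gi *v (\<chi> d. (1/2) * (\<Sum>a\<in>UNIV. \<Sum>b\<in>UNIV. T a b d * x$a * u$b))" for u :: "real^'n"
  proof -
    have "(\<Sum>d\<in>UNIV. Gi$c$d * ((1/2) * (\<Sum>a\<in>UNIV. \<Sum>b\<in>UNIV. T a b d * x$a * u$b)))
       = (\<Sum>d\<in>UNIV. \<Sum>a\<in>UNIV. \<Sum>b\<in>UNIV. (1/2) * Gi$c$d * T a b d * x$a * u$b)" for c
      by (simp add: sum_distrib_left mult.assoc)
    also have "\<dots> c = (\<Sum>a\<in>UNIV. \<Sum>b\<in>UNIV. \<Sum>d\<in>UNIV. (1/2) * Gi$c$d * T a b d * x$a * u$b)" for c
      by (rule swap3)
    also have "\<dots> c = (\<Sum>a\<in>UNIV. \<Sum>b\<in>UNIV. ((1/2) * (\<Sum>d\<in>UNIV. Gi$c$d * T a b d)) * x$a * u$b)" for c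
      by (simp add: sum_distrib_left sum_distrib_right mult.assoc)
    finally show ?thesis unfolding matrix_vector_mult_def by (simp add: vec_eq_iff)
  qed
  have e1: "(\<chi> c. \<Sum>a\<in>UNIV. \<Sum>b\<in>UNIV. ((1/2) * (\<Sum>d\<in>UNIV. Gi$c$d * (Dg a b d + Dg b a d - Dg d a b))) * x$a * y$b) = Gi *v w1"
    unfolding w1_def using gen[of y] unfolding T_def .
  have e2: "(\<chi> c. \<Sum>a\<in>UNIV. \<Sum>b\<in>UNIV. ((1/2) * (\<Sum>d\<in>UNIV. Gi$c$d * (Dg a b d + Dg b a d - Dg d a b))) * x$a * z$b) = Gi *v w2"
    unfolding w2_def using gen[of z] unfolding T_def .
  have GG: "G *v (Gi *v w) = w" for w by (simp add: matrix_vector_mul_assoc GGi)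
  have "(Gi *v w1) \<bullet> (G *v z) = w1 \<bullet> z"
    using sym_mat_inner[OF Gs, of "Gi *v w1" z] GG by simp
  moreover have "y \<bullet> (G *v (Gi *v w2)) = y \<bullet> w2" using GG by simp
  moreover have "w1 \<bullet> z + y \<bullet> w2 = (\<Sum>a\<in>UNIV. \<Sum>b\<in>UNIV. y$a * (\<Sum>c\<in>UNIV. x$c * Dg c a b) * z$b)"
  proof -
    have "w1 \<bullet> z = (\<Sum>d\<in>UNIV. \<Sum>a\<in>UNIV. \<Sum>b\<in>UNIV. (1/2) * T a b d * x$a * y$b * z$d)"
      unfolding w1_def inner_vec_def
      by (simp add: sum_distrib_left sum_distrib_right mult.assoc mult.left_commute)
    also have "\<dots> = (\<Sum>a\<in>UNIV. \<Sum>b\<in>UNIV. \<Sum>d\<in>UNIV. (1/2) * T a b d * x$a * y$b * z$d)"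
      by (rule swap3)
    finally have 1: "w1 \<bullet> z = \<dots>" .
    have "y \<bullet> w2 = (\<Sum>b\<in>UNIV. \<Sum>a\<in>UNIV. \<Sum>d\<in>UNIV. (1/2) * T a d b * x$a * y$b * z$d)"
      unfolding w2_def inner_vec_def
      by (simp add: sum_distrib_left sum_distrib_right mult.assoc mult.left_commute)
    also have "\<dots> = (\<Sum>a\<in>UNIV. \<Sum>b\<in>UNIV. \<Sum>d\<in>UNIV. (1/2) * T a d b * x$a * y$b * z$d)"
      by (rule sum.swap)
    finally have 2: "y \<bullet> w2 = \<dots>" .
    have "(\<Sum>a\<in>UNIV. \<Sum>b\<in>UNIV. y$a * (\<Sum>c\<in>UNIV. x$c * Dg c a b) * z$b)
        = (\<Sum>b\<in>UNIV. \<Sum>d\<in>UNIV. \<Sum>a\<in>UNIV. Dg a b d * x$a * y$b * z$d)"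
      by (simp add: sum_distrib_left sum_distrib_right mult.assoc mult.left_commute)
    also have "\<dots> = (\<Sum>b\<in>UNIV. \<Sum>a\<in>UNIV. \<Sum>d\<in>UNIV. Dg a b d * x$a * y$b * z$d)"
      by (rule sum.cong[OF refl], rule sum.swap)
    also have "\<dots> = (\<Sum>a\<in>UNIV. \<Sum>b\<in>UNIV. \<Sum>d\<in>UNIV. Dg a b d * x$a * y$b * z$d)"
      by (rule sum.swap)
    finally have 3: "(\<Sum>a\<in>UNIV. \<Sum>b\<in>UNIV. y$a * (\<Sum>c\<in>UNIV. x$c * Dg c a b) * z$b) = \<dots>" .
    have 4: "(1/2) * T a b d * x$a * y$b * z$d + (1/2) * T a d b * x$a * y$b * z$d
        = Dg a b d * x$a * y$b * z$d" for a b d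
      unfolding T_def using Ds[of a b d] by (simp add: algebra_simps)
    show ?thesis unfolding 1 2 3 by (simp only: sum.distrib[symmetric] 4)
  qed
  ultimately show ?thesis using e1 e2 by simp
qed

lemma frechet_local_eq:
  assumes "open D" "p \<in> D" "\<forall>q\<in>D. f q = h q" "h differentiable (at p)"
  shows "frechet_derivative f (at p) = frechet_derivative h (at p)"
proof -
  have "(h has_derivative frechet_derivative h (at p)) (at p)"
    using assms(4) frechet_derivative_works by blast
  then have "(f has_derivative frechet_derivative h (at p)) (at p)"
    using local_has_deriv[OF assms(1,2,3)] by blast
  then show ?thesis using frechet_derivative_at by metis
qed

lemma dderiv_partial:
  assumes "f differentiable (at p)"
  shows "dderiv f p v = (\<Sum>c\<in>UNIV. v$c * partial c f p)"
proof -
  have "linear (frechet_derivative f (at p))"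
    using assms frechet_derivative_works has_derivative_linear by blast
  then have "frechet_derivative f (at p) (\<Sum>c\<in>UNIV. v$c *\<^sub>R axis c 1) = (\<Sum>c\<in>UNIV. v$c * frechet_derivative f (at p) (axis c 1))"
    by (simp add: linear_sum linear_scale)
  moreover have "(\<Sum>c\<in>UNIV. v$c *\<^sub>R axis c (1::real)) = v"
    using basis_expansion[of v] by (simp add: scalar_mult_eq_scaleR)
  ultimately show ?thesis unfolding dderiv_def partial_def by simp
qed

lemma ginv:
  assumes "riem_metric D g" "p \<in> D"
  shows "g p ** matrix_inv (g p) = mat 1"
proof -
  have "\<forall>x. g p *v x = 0 \<longrightarrow> x = 0"
  proof (intro allI impI)
    fix x assume "g p *v x = 0"
    then have "x \<bullet> (g p *v x) = 0" by simp
    then show "x = 0" using assms unfolding riem_metric_def by force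
  qed
  then have "invertible (g p)"
    using invertible_left_inverse matrix_left_invertible_ker by blast
  then have "\<exists>A'. g p ** A' = mat 1 \<and> A' ** g p = mat 1" unfolding invertible_def .
  then have "g p ** matrix_inv (g p) = mat 1 \<and> matrix_inv (g p) ** g p = mat 1"
    unfolding matrix_inv_def by (rule someI_ex)
  then show ?thesis by blast
qed

lemma tform_add_left: "tform M p (u + v) w = tform M p u w + tform M p v w"
  unfolding tform_def by (simp add: inner_add_left)
lemma tform_add_right: "tform M p w (u + v) = tform M p w u + tform M p w v"
  unfolding tform_def by (simp add: matrix_vector_right_distrib inner_add_right)

lemma metric_compat:
  fixes X Y Z :: "real^'n \<Rightarrow> real^'n" and g :: "real^'n \<Rightarrow> real^'n^'n"
  assumes metric: "riem_metric D g" and p: "p \<in> D"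
    and Y: "\<And>a. (\<lambda>q. Y q $ a) differentiable (at p)"
    and Z: "\<And>a. (\<lambda>q. Z q $ a) differentiable (at p)"
  shows "dderiv (\<lambda>q. tform g q (Y q) (Z q)) p (X p)
     = tform g p (lc_conn g X Y p) (Z p) + tform g p (Y p) (lc_conn g X Z p)"
proof -
  have oD: "open D" using metric unfolding riem_metric_def by simp
  have gd: "(\<lambda>q. g q $ a $ b) differentiable (at p)" for a b
    using metric p oD smooth_fun_diff unfolding riem_metric_def smooth_mf_def by blast
  have gsym: "\<forall>q\<in>D. g q $ a $ b = g q $ b $ a" for a b
  proof
    fix q assume "q \<in> D"
    then have "transpose (g q) = g q" using metric unfolding riem_metric_def by blast
    moreover have "transpose (g q) $ b $ a = g q $ a $ b" by (simp add: transpose_def)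
    ultimately show "g q $ a $ b = g q $ b $ a" by simp
  qed
  define Dg where "Dg = (\<lambda>c a b. partial c (\<lambda>q. g q $ a $ b) p)"
  have Ds: "Dg c a b = Dg c b a" for c a b
    unfolding Dg_def partial_def using frechet_local_eq[OF oD p gsym[of a b] gd[of b a]] by simp
  have Gs: "transpose (g p) = g p" using metric p unfolding riem_metric_def by blast
  have dg: "dderiv (\<lambda>q. g q $ a $ b) p (X p) = (\<Sum>c\<in>UNIV. X p $ c * Dg c a b)" for a b
    unfolding Dg_def by (rule dderiv_partial[OF gd])
  have der: "dderiv (\<lambda>q. tform g q (Y q) (Z q)) p (X p) = tform g p (vd Y p (X p)) (Z p)
        + (\<Sum>a\<in>UNIV. \<Sum>b\<in>UNIV. Y p $ a * (\<Sum>c\<in>UNIV. X p $ c * Dg c a b) * Z p $ b)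
        + tform g p (Y p) (vd Z p (X p))"
    using dderiv_eq[OF tform_deriv[OF Y Z gd]] dg by simp
  have lY: "lc_conn g X Y p = vd Y p (X p) + (\<chi> c. \<Sum>a\<in>UNIV. \<Sum>b\<in>UNIV. ((1/2) * (\<Sum>d\<in>UNIV. matrix_inv (g p)$c$d * (Dg a b d + Dg b a d - Dg d a b))) * X p$a * Y p$b)"
    unfolding lc_conn_def vd_def christoffel_def Dg_def by (simp add: vec_eq_iff)
  have lZ: "lc_conn g X Z p = vd Z p (X p) + (\<chi> c. \<Sum>a\<in>UNIV. \<Sum>b\<in>UNIV. ((1/2) * (\<Sum>d\<in>UNIV. matrix_inv (g p)$c$d * (Dg a b d + Dg b a d - Dg d a b))) * X p$a * Z p$b)"
    unfolding lc_conn_def vd_def christoffel_def Dg_def by (simp add: vec_eq_iff)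
  have key: "tform g p (\<chi> c. \<Sum>a\<in>UNIV. \<Sum>b\<in>UNIV. ((1/2) * (\<Sum>d\<in>UNIV. matrix_inv (g p)$c$d * (Dg a b d + Dg b a d - Dg d a b))) * X p$a * Y p$b) (Z p)
     + tform g p (Y p) (\<chi> c. \<Sum>a\<in>UNIV. \<Sum>b\<in>UNIV. ((1/2) * (\<Sum>d\<in>UNIV. matrix_inv (g p)$c$d * (Dg a b d + Dg b a d - Dg d a b))) * X p$a * Z p$b)
     = (\<Sum>a\<in>UNIV. \<Sum>b\<in>UNIV. Y p $ a * (\<Sum>c\<in>UNIV. X p $ c * Dg c a b) * Z p $ b)"
    using chr_alg[OF ginv[OF metric p] Gs Ds, where x="X p" and y="Y p" and z="Z p"]
    unfolding tform_def .
  show ?thesis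
    unfolding der lY lZ tform_add_left tform_add_right
    using key by linarith
qed

lemma frame_span:
  fixes G :: "real^'n^'n" and E :: "nat \<Rightarrow> real^'n"
  assumes on: "\<forall>i\<in>{1..CARD('n)}. \<forall>j\<in>{1..CARD('n)}. E i \<bullet> (G *v E j) = (if i = j then 1 else 0)"
  shows "span (E ` {1..CARD('n)}) = UNIV"
proof -
  let ?I = "{1..CARD('n)}"
  have inj: "inj_on E ?I"
  proof (rule inj_onI)
    fix i j assume i: "i \<in> ?I" and j: "j \<in> ?I" and "E i = E j"
    then have "E i \<bullet> (G *v E j) = E j \<bullet> (G *v E j)" by simp
    then show "i = j" using on i j by (auto split: if_splits)
  qed
  have ind: "independent (E ` ?I)"
  proof
    assume "dependent (E ` ?I)"
    then obtain u where u: "\<exists>v\<in>E ` ?I. u v \<noteq> 0" and s: "(\<Sum>v\<in>E ` ?I. u v *\<^sub>R v) = 0"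
      using dependent_finite[of "E ` ?I"] by auto
    from u obtain k where k: "k \<in> ?I" "u (E k) \<noteq> 0" by auto
    have "0 = (\<Sum>v\<in>E ` ?I. u v *\<^sub>R v) \<bullet> (G *v E k)" using s by simp
    also have "\<dots> = (\<Sum>v\<in>E ` ?I. u v * (v \<bullet> (G *v E k)))" by (simp add: inner_sum_left)
    also have "\<dots> = (\<Sum>i\<in>?I. u (E i) * (E i \<bullet> (G *v E k)))" using sum.reindex[OF inj, of "\<lambda>v. u v * (v \<bullet> (G *v E k))"] by (simp add: comp_def)
    also have "\<dots> = (\<Sum>i\<in>?I. if i = k then u (E k) else 0)"
      using on k by (intro sum.cong) auto
    also have "\<dots> = u (E k)" using k by simp
    finally show False using k by simp
  qed
  have "card (E ` ?I) = CARD('n)" using card_image[OF inj] by simp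
  then have "UNIV \<subseteq> span (E ` ?I)"
    using card_ge_dim_independent[OF _ ind, of UNIV] by simp
  then show ?thesis by auto
qed

lemma zero_on_frame:
  fixes E :: "nat \<Rightarrow> real^'n" and w :: "real^'n"
  assumes sp: "span (E ` {1..CARD('n)}) = UNIV" and z: "\<forall>j\<in>{1..CARD('n)}. E j \<bullet> w = 0"
  shows "w = 0"
proof -
  have "orthogonal w a" if "a \<in> span (E ` {1..CARD('n)})" for a
  proof -
    have "orthogonal w y" if "y \<in> E ` {1..CARD('n)}" for y
      using that z by (auto simp: orthogonal_def inner_commute)
    then show ?thesis using orthogonal_to_span[OF that] by blast
  qed
  then have "orthogonal w w" using sp by auto
  then show ?thesis by (simp add: orthogonal_def)
qed

lemma prod_expand:
  fixes t :: real and x :: "nat \<Rightarrow> real"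
  shows "(\<Prod>i\<in>{1..n}. t - x i) = (\<Sum>j\<in>{0..n}. (-1)^j * t^(n-j) * (\<Sum>S\<in>{S. S \<subseteq> {1..n} \<and> card S = j}. \<Prod>i\<in>S. x i))"
proof -
  let ?I = "{1..n::nat}"
  have "(\<Prod>i\<in>?I. t - x i) = (\<Prod>i\<in>?I. (- x i) + t)" by simp
  also have "\<dots> = (\<Sum>X\<in>Pow ?I. (\<Prod>i\<in>X. - x i) * (\<Prod>i\<in>?I - X. t))"
    by (rule prod_add) simp
  also have "\<dots> = (\<Sum>X\<in>Pow ?I. (-1)^card X * t^(n - card X) * (\<Prod>i\<in>X. x i))"
  proof (rule sum.cong[OF refl])
    fix X assume X: "X \<in> Pow ?I"
    then have fX: "finite X" by (meson PowD finite_atLeastAtMost finite_subset)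
    have "(\<Prod>i\<in>X. - x i) = (-1)^card X * (\<Prod>i\<in>X. x i)"
      using prod_uminus[of x X] by simp
    moreover have "card (?I - X) = n - card X" using X fX by (simp add: card_Diff_subset)
    ultimately show "(\<Prod>i\<in>X. - x i) * (\<Prod>i\<in>?I - X. t) = (-1)^card X * t^(n - card X) * (\<Prod>i\<in>X. x i)"
      by simp
  qed
  also have "\<dots> = (\<Sum>j\<in>{0..n}. \<Sum>X\<in>{X. X \<in> Pow ?I \<and> card X = j}. (-1)^card X * t^(n - card X) * (\<Prod>i\<in>X. x i))"
  proof (rule sum.group[symmetric])
    show "card ` Pow ?I \<subseteq> {0..n}"
    proof
      fix k assume "k \<in> card ` Pow ?I"
      then obtain X where "X \<subseteq> ?I" "k = card X" by auto
      then have "k \<le> card ?I" using card_mono[of ?I X] by simp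
      then show "k \<in> {0..n}" by simp
    qed
  qed auto
  also have "\<dots> = (\<Sum>j\<in>{0..n}. (-1)^j * t^(n-j) * (\<Sum>S\<in>{S. S \<subseteq> ?I \<and> card S = j}. \<Prod>i\<in>S. x i))"
    by (rule sum.cong[OF refl]) (simp add: sum_distrib_left)
  finally show ?thesis .
qed

lemma charpoly_deriv_at:
  assumes l: "l \<in> {1..n}"
  shows "poly (pderiv (charpoly n lam p)) (lam l p) = (\<Prod>m\<in>{1..n} - {l}. lam l p - lam m p)"
proof -
  have "pderiv (charpoly n lam p) = (\<Sum>a\<in>{1..n}. (\<Prod>i\<in>{1..n} - {a}. [:- lam i p, 1:]))"
    unfolding charpoly_def pderiv_prod by (simp add: pderiv_pCons)
  then have "poly (pderiv (charpoly n lam p)) (lam l p) = (\<Sum>a\<in>{1..n}. \<Prod>i\<in>{1..n} - {a}. lam l p - lam i p)"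
    by (simp add: poly_sum poly_prod)
  also have "\<dots> = (\<Sum>a\<in>{1..n}. if a = l then (\<Prod>i\<in>{1..n} - {l}. lam l p - lam i p) else 0)"
  proof (rule sum.cong[OF refl])
    fix a assume a: "a \<in> {1..n}"
    show "(\<Prod>i\<in>{1..n} - {a}. lam l p - lam i p) = (if a = l then (\<Prod>i\<in>{1..n} - {l}. lam l p - lam i p) else 0)"
    proof (cases "a = l")
      case False
      then have "l \<in> {1..n} - {a}" using l by simp
      then have "(\<Prod>i\<in>{1..n} - {a}. lam l p - lam i p) = 0" by (intro prod_zero) auto
      then show ?thesis using False by simp
    qed simp
  qed
  also have "\<dots> = (\<Prod>i\<in>{1..n} - {l}. lam l p - lam i p)" using l by simp
  finally show ?thesis .
qed

lemma esym_diff: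
  fixes lam :: "nat \<Rightarrow> real^'n \<Rightarrow> real"
  assumes "\<forall>i\<in>{1..n}. lam i differentiable (at p)"
  shows "esym n j lam differentiable (at p)"
proof -
  have "(\<lambda>q. \<Prod>i\<in>S. lam i q) differentiable (at p)" if "S \<subseteq> {1..n}" for S
  proof -
    have "((\<lambda>q. \<Prod>i\<in>S. lam i q) has_derivative
       (\<lambda>y. \<Sum>i\<in>S. frechet_derivative (lam i) (at p) y * (\<Prod>j\<in>S - {i}. lam j p))) (at p)"
      using assms that by (intro has_derivative_prod) (auto intro: frechet_derivative_works[THEN iffD1])
    then show ?thesis by (rule differentiableI)
  qed
  then show ?thesis unfolding esym_def[abs_def]
    by (intro differentiable_sum) auto
qed

lemma dlam_formula:
  fixes lam :: "nat \<Rightarrow> real^'n \<Rightarrow> real"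
  assumes oD: "open D" and p: "p \<in> D"
    and ld: "\<forall>i\<in>{1..n}. lam i differentiable (at p)"
    and const: "\<forall>j\<in>{1..n}. j \<noteq> n - 1 \<longrightarrow> (\<exists>c. \<forall>q\<in>D. esym n j lam q = c)"
    and l: "l \<in> {1..n}"
  shows "dderiv (lam l) p v * poly (pderiv (charpoly n lam p)) (lam l p)
       = (-1)^n * lam l p * dderiv (esym n (n - 1) lam) p v"
proof -
  let ?I = "{1..n}"
  have n1: "n \<ge> 1" using l by simp
  define t where "t = lam l p"
  have h1: "((\<lambda>q. \<Prod>i\<in>?I. t - lam i q) has_derivative
       (\<lambda>y. \<Sum>i\<in>?I. (- dderiv (lam i) p y) * (\<Prod>j\<in>?I - {i}. t - lam j p))) (at p)"
  proof (intro has_derivative_prod)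
    fix i assume "i \<in> ?I"
    then have "(lam i has_derivative dderiv (lam i) p) (at p)"
      using ld unfolding dderiv_def by (metis frechet_derivative_works)
    then show "((\<lambda>q. t - lam i q) has_derivative (\<lambda>y. - dderiv (lam i) p y)) (at p)"
      by (auto intro!: derivative_eq_intros)
  qed
  have ed: "(esym n j lam has_derivative dderiv (esym n j lam) p) (at p)" for j
    using esym_diff[OF ld] unfolding dderiv_def by (metis frechet_derivative_works)
  have h2: "((\<lambda>q. \<Sum>j\<in>{0..n}. (-1)^j * t^(n-j) * esym n j lam q) has_derivative
       (\<lambda>y. \<Sum>j\<in>{0..n}. (-1)^j * t^(n-j) * dderiv (esym n j lam) p y)) (at p)"
    by (intro has_derivative_sum has_derivative_mult_right ed)
  have feq: "(\<lambda>q. \<Prod>i\<in>?I. t - lam i q) = (\<lambda>q. \<Sum>j\<in>{0..n}. (-1)^j * t^(n-j) * esym n j lam q)"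
    unfolding esym_def by (rule ext, rule prod_expand)
  have deq: "(\<Sum>i\<in>?I. (- dderiv (lam i) p v) * (\<Prod>j\<in>?I - {i}. t - lam j p))
     = (\<Sum>j\<in>{0..n}. (-1)^j * t^(n-j) * dderiv (esym n j lam) p v)"
  proof -
    have h1': "((\<lambda>q. \<Sum>j\<in>{0..n}. (-1)^j * t^(n-j) * esym n j lam q) has_derivative
       (\<lambda>y. \<Sum>i\<in>?I. (- dderiv (lam i) p y) * (\<Prod>j\<in>?I - {i}. t - lam j p))) (at p)"
      using h1 unfolding feq .
    have "(\<lambda>y. \<Sum>i\<in>?I. (- dderiv (lam i) p y) * (\<Prod>j\<in>?I - {i}. t - lam j p))
       = (\<lambda>y. \<Sum>j\<in>{0..n}. (-1)^j * t^(n-j) * dderiv (esym n j lam) p y)"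
      using frechet_derivative_at[OF h1'] frechet_derivative_at[OF h2] by simp
    then show ?thesis by (rule fun_cong)
  qed
  have "(\<Sum>i\<in>?I. (- dderiv (lam i) p v) * (\<Prod>j\<in>?I - {i}. t - lam j p))
      = (\<Sum>i\<in>?I. if i = l then (- dderiv (lam l) p v) * (\<Prod>j\<in>?I - {l}. t - lam j p) else 0)"
  proof (rule sum.cong[OF refl])
    fix i assume "i \<in> ?I"
    show "(- dderiv (lam i) p v) * (\<Prod>j\<in>?I - {i}. t - lam j p) = (if i = l then (- dderiv (lam l) p v) * (\<Prod>j\<in>?I - {l}. t - lam j p) else 0)"
    proof (cases "i = l")
      case False
      then have "l \<in> ?I - {i}" using l by simp
      then have "(\<Prod>j\<in>?I - {i}. t - lam j p) = 0" unfolding t_def by (intro prod_zero) auto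
      then show ?thesis using False by simp
    qed simp
  qed
  also have "\<dots> = - dderiv (lam l) p v * poly (pderiv (charpoly n lam p)) (lam l p)"
    using l charpoly_deriv_at[OF l, of lam p] unfolding t_def by simp
  finally have L: "(\<Sum>i\<in>?I. (- dderiv (lam i) p v) * (\<Prod>j\<in>?I - {i}. t - lam j p))
     = - dderiv (lam l) p v * poly (pderiv (charpoly n lam p)) (lam l p)" .
  have z: "dderiv (esym n j lam) p v = 0" if jj: "j \<in> {0..n}" "j \<noteq> n - 1" for j
  proof (cases "j = 0")
    case True
    have "{S. S \<subseteq> {1..n} \<and> card S = 0} = {{}}"
      by (auto dest: finite_subset[OF _ finite_atLeastAtMost])
    then have "\<forall>q\<in>D. esym n j lam q = 1" using True unfolding esym_def by simp
    then show ?thesis by (rule dderiv_const[OF oD p])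
  next
    case False
    then have "j \<in> {1..n}" using jj by auto
    then obtain c where "\<forall>q\<in>D. esym n j lam q = c" using const jj by blast
    then show ?thesis by (rule dderiv_const[OF oD p])
  qed
  have "(\<Sum>j\<in>{0..n}. (-1)^j * t^(n-j) * dderiv (esym n j lam) p v)
      = (\<Sum>j\<in>{0..n}. if j = n - 1 then (-1)^(n-1) * t^(n-(n-1)) * dderiv (esym n (n-1) lam) p v else 0)"
    using z by (intro sum.cong) auto
  also have "\<dots> = (-1)^(n-1) * t * dderiv (esym n (n-1) lam) p v" using n1 by simp
  finally have R: "(\<Sum>j\<in>{0..n}. (-1)^j * t^(n-j) * dderiv (esym n j lam) p v) = (-1)^(n-1) * t * dderiv (esym n (n-1) lam) p v" .
  have m1: "(-1::real)^n = - ((-1)^(n-1))"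
  proof -
    have "n = Suc (n - 1)" using n1 by simp
    then have "(-1::real)^n = (-1) * (-1)^(n-1)" by (metis power_Suc)
    then show ?thesis by simp
  qed
  show ?thesis using deq L R m1 unfolding t_def by (simp add: algebra_simps)
qed

definition Tlt :: "nat \<Rightarrow> (nat \<times> nat \<times> nat) set" where
  "Tlt n = {(i,j,k). i \<in> {1..n} \<and> j \<in> {1..n} \<and> k \<in> {1..n} \<and> i < j \<and> k \<noteq> i \<and> k \<noteq> j}"
definition Tgt :: "nat \<Rightarrow> (nat \<times> nat \<times> nat) set" where
  "Tgt n = {(i,j,k). i \<in> {1..n} \<and> j \<in> {1..n} \<and> k \<in> {1..n} \<and> j < i \<and> k \<noteq> i \<and> k \<noteq> j}"
definition Td :: "nat \<Rightarrow> (nat \<times> nat \<times> nat) set" where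
  "Td n = {(i,j,k). i \<in> {1..n} \<and> j \<in> {1..n} \<and> k \<in> {1..n} \<and> i \<noteq> j \<and> k \<noteq> i \<and> k \<noteq> j}"

lemma fin_T: "finite (Td n)" "finite (Tlt n)" "finite (Tgt n)"
proof -
  have "Td n \<subseteq> {1..n} \<times> {1..n} \<times> {1..n}" "Tlt n \<subseteq> {1..n} \<times> {1..n} \<times> {1..n}" "Tgt n \<subseteq> {1..n} \<times> {1..n} \<times> {1..n}"
    unfolding Td_def Tlt_def Tgt_def by auto
  then show "finite (Td n)" "finite (Tlt n)" "finite (Tgt n)" by (auto intro: finite_subset)
qed

lemma split_sym:
  fixes f :: "nat \<Rightarrow> nat \<Rightarrow> nat \<Rightarrow> real"
  assumes sym: "\<And>i j k. f i j k = f j i k"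
  shows "(\<Sum>(i,j,k)\<in>Td n. f i j k) = 2 * (\<Sum>(i,j,k)\<in>Tlt n. f i j k)"
proof -
  have U: "Td n = Tlt n \<union> Tgt n" unfolding Td_def Tlt_def Tgt_def by auto
  have Dj: "Tlt n \<inter> Tgt n = {}" unfolding Tlt_def Tgt_def by auto
  have "(\<Sum>(i,j,k)\<in>Tgt n. f i j k) = (\<Sum>(i,j,k)\<in>Tlt n. f i j k)"
    by (rule sum.reindex_bij_witness[where i="\<lambda>(i,j,k). (j,i,k)" and j="\<lambda>(i,j,k). (j,i,k)"])
       (auto simp: Tlt_def Tgt_def sym)
  then show ?thesis unfolding U using sum.union_disjoint[OF fin_T(2) fin_T(3) Dj, of "\<lambda>(i,j,k). f i j k"] by simp
qed

lemma three_frac: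
  fixes a b c :: real
  assumes "a \<noteq> b" "b \<noteq> c" "a \<noteq> c"
  shows "1/((a-c)*(b-c)) + 1/((b-a)*(c-a)) + 1/((c-b)*(a-b)) = 0"
proof -
  have "a - b \<noteq> 0" "b - c \<noteq> 0" "a - c \<noteq> 0" "b - a \<noteq> 0" "c - a \<noteq> 0" "c - b \<noteq> 0" using assms by auto
  define x where "x = a - b"
  define y where "y = b - c"
  have xy: "x \<noteq> 0" "y \<noteq> 0" "x + y \<noteq> 0" using assms unfolding x_def y_def by auto
  have eqs: "a - c = x + y" "b - c = y" "b - a = - x" "c - a = - (x + y)" "c - b = - y" "a - b = x"
    unfolding x_def y_def by auto
  have "1/((a-c)*(b-c)) + 1/((b-a)*(c-a)) + 1/((c-b)*(a-b)) = 1/((x+y)*y) + 1/(x*(x+y)) - 1/(y*x)"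
  proof -
    have "(a-c)*(b-c) = (x+y)*y" "(b-a)*(c-a) = x*(x+y)" "(c-b)*(a-b) = -(y*x)"
      unfolding x_def y_def by (simp_all add: algebra_simps)
    then show ?thesis by simp
  qed
  also have "\<dots> = 0" using xy by (simp add: divide_simps)
  finally show ?thesis .
qed

lemma cross_zero:
  fixes lam :: "nat \<Rightarrow> real" and Gm :: "nat \<Rightarrow> nat \<Rightarrow> nat \<Rightarrow> real"
  assumes inj: "inj_on lam {1..n}"
    and cod2: "\<And>i j k. i \<in> {1..n} \<Longrightarrow> j \<in> {1..n} \<Longrightarrow> k \<in> {1..n} \<Longrightarrow> i \<noteq> j \<Longrightarrow> k \<noteq> i \<Longrightarrow> k \<noteq> j \<Longrightarrow>
        (lam j - lam k) * Gm i j k = (lam i - lam k) * Gm j i k"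
    and anti: "\<And>i j k. i \<in> {1..n} \<Longrightarrow> j \<in> {1..n} \<Longrightarrow> k \<in> {1..n} \<Longrightarrow> Gm i j k = - Gm i k j"
  shows "(\<Sum>(i,j,k)\<in>Tlt n. Gm i j k * Gm j i k) = 0"
proof -
  define h where "h = (\<lambda>i j k. (lam j - lam k) * Gm i j k)"
  define F where "F = (\<lambda>i j k. (h i j k)^2 / ((lam i - lam k) * (lam j - lam k)))"
  have ne: "lam i \<noteq> lam j" if "i \<in> {1..n}" "j \<in> {1..n}" "i \<noteq> j" for i j
    using inj that by (meson inj_onD)
  have h12: "h i j k = h j i k" if "(i,j,k) \<in> Td n" for i j k
    using cod2 that unfolding h_def Td_def by auto
  have h23: "h i j k = h i k j" if "(i,j,k) \<in> Td n" for i j k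
    using anti[of i j k] that unfolding h_def Td_def by (auto simp: algebra_simps)
  have GF: "Gm i j k * Gm j i k = F i j k" if "(i,j,k) \<in> Td n" for i j k
  proof -
    have nz: "lam j - lam k \<noteq> 0" "lam i - lam k \<noteq> 0" using ne that unfolding Td_def by auto
    have aux: "\<And>x y u v::real. x \<noteq> 0 \<Longrightarrow> y \<noteq> 0 \<Longrightarrow> u * v = (y * u) * (x * v) / (x * y)"
      by (simp add: field_simps)
    then have "Gm i j k * Gm j i k = h i j k * h j i k / ((lam i - lam k) * (lam j - lam k))"
      unfolding h_def using nz by blast
    then show ?thesis unfolding F_def power2_eq_square using h12[OF that] by simp
  qed
  define F' where "F' = (\<lambda>i j k. if (i,j,k) \<in> Td n then F i j k else 0)"
  have F'sym: "F' i j k = F' j i k" for i j k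
  proof (cases "(i,j,k) \<in> Td n")
    case True
    then have "(j,i,k) \<in> Td n" unfolding Td_def by auto
    then show ?thesis using True h12[OF True] unfolding F'_def F_def by (simp add: mult.commute)
  next
    case False
    then have "(j,i,k) \<notin> Td n" unfolding Td_def by auto
    then show ?thesis using False unfolding F'_def by simp
  qed
  have S1: "(\<Sum>(i,j,k)\<in>Tlt n. Gm i j k * Gm j i k) = (\<Sum>(i,j,k)\<in>Tlt n. F' i j k)"
    by (rule sum.cong[OF refl]) (auto simp: F'_def GF Tlt_def Td_def)
  have rot1: "(\<Sum>(i,j,k)\<in>Td n. F' i j k) = (\<Sum>(i,j,k)\<in>Td n. F' j k i)"
    by (rule sum.reindex_bij_witness[where i="\<lambda>(i,j,k). (j,k,i)" and j="\<lambda>(i,j,k). (k,i,j)"])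
       (auto simp: Td_def)
  have rot2: "(\<Sum>(i,j,k)\<in>Td n. F' i j k) = (\<Sum>(i,j,k)\<in>Td n. F' k i j)"
    by (rule sum.reindex_bij_witness[where i="\<lambda>(i,j,k). (k,i,j)" and j="\<lambda>(i,j,k). (j,k,i)"])
       (auto simp: Td_def)
  have Z: "F' i j k + F' j k i + F' k i j = 0" if "(i,j,k) \<in> Td n" for i j k
  proof -
    have t2: "(j,k,i) \<in> Td n" "(k,i,j) \<in> Td n" using that unfolding Td_def by auto
    have e1: "h j k i = h i j k" using h12[OF that] h23[of j i k] that unfolding Td_def by auto
    have e2: "h k i j = h i j k" using h23[OF that] h12[of k i j] h12[of i k j] that unfolding Td_def by auto
    have abc: "lam i \<noteq> lam j" "lam j \<noteq> lam k" "lam i \<noteq> lam k" using ne that unfolding Td_def by auto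
    have "F' i j k + F' j k i + F' k i j = (h i j k)^2 * (1/((lam i - lam k)*(lam j - lam k)) + 1/((lam j - lam i)*(lam k - lam i)) + 1/((lam k - lam j)*(lam i - lam j)))"
      using that t2 e1 e2 unfolding F'_def F_def by (simp add: algebra_simps)
    then show ?thesis using three_frac[OF abc] by simp
  qed
  have "3 * (\<Sum>(i,j,k)\<in>Td n. F' i j k) = (\<Sum>(i,j,k)\<in>Td n. F' i j k + F' j k i + F' k i j)"
    using rot1 rot2 by (simp add: sum.distrib split_def)
  also have "\<dots> = 0" using Z by (intro sum.neutral) auto
  finally have "(\<Sum>(i,j,k)\<in>Td n. F' i j k) = 0" by simp
  then show ?thesis using S1 split_sym[of F', OF F'sym] by simp
qed

lemma tform_sum_left: "finite S \<Longrightarrow> tform M p (\<Sum>i\<in>S. f i) w = (\<Sum>i\<in>S. tform M p (f i) w)"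
  unfolding tform_def by (simp add: inner_sum_left)
lemma tform_sum_right: "finite S \<Longrightarrow> tform M p w (\<Sum>i\<in>S. f i) = (\<Sum>i\<in>S. tform M p w (f i))"
proof -
  assume "finite S"
  have "M p *v (\<Sum>i\<in>S. f i) = (\<Sum>i\<in>S. M p *v f i)"
    using linear_sum[OF matrix_vector_mul_linear[of "M p"]] by simp
  then show ?thesis unfolding tform_def by (simp add: inner_sum_right)
qed
lemma tform_scale_right: "tform M p w (c *\<^sub>R v) = c * tform M p w v"
proof -
  have "M p *v (c *\<^sub>R v) = c *\<^sub>R (M p *v v)"
    using linear_scale[OF matrix_vector_mul_linear[of "M p"]] by simp
  then show ?thesis unfolding tform_def by simp
qed

theorem proposition6p2:
  fixes D :: "(real^'n) set"
    and g A :: "real^'n \<Rightarrow> real^'n^'n"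
    and e :: "nat \<Rightarrow> real^'n \<Rightarrow> real^'n"
    and lam :: "nat \<Rightarrow> real^'n \<Rightarrow> real"
    and n :: nat
  defines "n \<equiv> CARD('n)"
  assumes metric: "riem_metric D g"
    and frame_smooth: "\<forall>i\<in>{1..n}. smooth_vf D (e i)"
    and frame_on: "\<forall>p\<in>D. \<forall>i\<in>{1..n}. \<forall>j\<in>{1..n}.
                      tform g p (e i p) (e j p) = (if i = j then 1 else 0)"
    and A_smooth: "smooth_mf D A"
    and A_sym: "\<forall>p\<in>D. transpose (A p) = A p"
    and A_codazzi: "codazzi D g A"
    and A_diag: "\<forall>p\<in>D. \<forall>i\<in>{1..n}. \<forall>j\<in>{1..n}.
                      tform A p (e i p) (e j p) = (if i = j then lam i p else 0)"
    and distinct: "\<forall>p\<in>D. inj_on (\<lambda>i. lam i p) {1..n}"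
    and const: "\<forall>k\<in>{1..n}. k \<noteq> n - 1 \<longrightarrow> (\<exists>c. \<forall>p\<in>D. esym n k lam p = c)"
  shows "\<forall>p\<in>D.
     (\<forall>i\<in>{1..n}. \<forall>k\<in>{1..n}. i \<noteq> k \<longrightarrow>
         Gam g e i i k p = bcoef n lam i k p * dderiv (esym n (n - 1) lam) p (e k p))
   \<and> tform g p (\<Sum>i\<in>{1..n}. lc_conn g (e i) (e i) p)
               (\<Sum>k\<in>{1..n}. dderiv (esym n (n - 1) lam) p (e k p) *\<^sub>R e k p)
       = (\<Sum>k\<in>{1..n}. ucoef n lam k p * (dderiv (esym n (n - 1) lam) p (e k p))^2)
   \<and> (\<Sum>(i,j,k)\<in>{(i,j,k). i \<in> {1..n} \<and> j \<in> {1..n} \<and> k \<in> {1..n} \<and> i < j \<and> k \<noteq> i \<and> k \<noteq> j}.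
         Gam g e i i k p * Gam g e j j k p - Gam g e i j k p * Gam g e j i k p)
       = (1/2) * (\<Sum>k\<in>{1..n}. Gcoef n lam k p * (dderiv (esym n (n - 1) lam) p (e k p))^2)"
proof
  fix p assume p: "p \<in> D"
  let ?I = "{1..n}"
  have oD: "open D" using metric unfolding riem_metric_def by simp
  have Gs: "transpose (g p) = g p" using metric p unfolding riem_metric_def by blast
  have As: "transpose (A p) = A p" using A_sym p by blast
  have ed: "\<And>a. (\<lambda>q. e i q $ a) differentiable (at p)" if "i \<in> ?I" for i
    using frame_smooth that p oD smooth_fun_diff unfolding smooth_vf_def by blast
  have Ad: "\<And>a b. (\<lambda>q. A q $ a $ b) differentiable (at p)"
    using A_smooth p oD smooth_fun_diff unfolding smooth_mf_def by blast
  have sym_g: "tform g p u w = tform g p w u" for u w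
    unfolding tform_def using sym_mat_inner[OF Gs] by (simp add: inner_commute)
  have sym_A: "tform A p u w = tform A p w u" for u w
    unfolding tform_def using sym_mat_inner[OF As] by (simp add: inner_commute)
  define Gm where "Gm = (\<lambda>i j k. Gam g e i j k p)"
  have anti: "Gm i j k = - Gm i k j" if "i \<in> ?I" "j \<in> ?I" "k \<in> ?I" for i j k
  proof -
    have "dderiv (\<lambda>q. tform g q (e j q) (e k q)) p (e i p)
       = tform g p (lc_conn g (e i) (e j) p) (e k p) + tform g p (e j p) (lc_conn g (e i) (e k) p)"
      by (rule metric_compat[OF metric p ed[OF that(2)] ed[OF that(3)]])
    moreover have "dderiv (\<lambda>q. tform g q (e j q) (e k q)) p (e i p) = 0"
      using frame_on that by (intro dderiv_const[OF oD p, of _ "if j = k then 1 else 0"]) auto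
    ultimately show ?thesis unfolding Gm_def Gam_def using sym_g by simp
  qed
  have span: "span ((\<lambda>i. e i p) ` {1..CARD('n)}) = UNIV"
    using frame_on p unfolding tform_def n_def by (intro frame_span[where G="g p"]) auto
  have Aexp: "tform A p w (e k p) = lam k p * tform g p w (e k p)" if k: "k \<in> ?I" for k w
  proof -
    define u where "u = A p *v e k p - lam k p *\<^sub>R (g p *v e k p)"
    have "\<forall>j\<in>{1..CARD('n)}. e j p \<bullet> u = 0"
    proof
      fix j assume "j \<in> {1..CARD('n)}"
      then have j: "j \<in> ?I" unfolding n_def .
      have "e j p \<bullet> u = tform A p (e j p) (e k p) - lam k p * tform g p (e j p) (e k p)"
        unfolding u_def tform_def by (simp add: inner_diff_right)
      then show "e j p \<bullet> u = 0" using A_diag frame_on p j k by auto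
    qed
    then have "u = 0" using zero_on_frame[OF span] by blast
    then have "A p *v e k p = lam k p *\<^sub>R (g p *v e k p)" unfolding u_def by simp
    then show ?thesis unfolding tform_def by simp
  qed
  have Aexp2: "tform A p (e k p) w = lam k p * tform g p w (e k p)" if k: "k \<in> ?I" for k w
    using Aexp[OF k] sym_A by simp
  have fAd: "((\<lambda>q. tform A q (e i q) (e i q)) has_derivative frechet_derivative (\<lambda>q. tform A q (e i q) (e i q)) (at p)) (at p)" if "i \<in> ?I" for i
    using tform_deriv[OF ed[OF that] ed[OF that] Ad] differentiableI frechet_derivative_works by blast
  have lameq: "\<forall>q\<in>D. lam i q = tform A q (e i q) (e i q)" if "i \<in> ?I" for i
    using A_diag that by auto
  have lamd: "lam i differentiable (at p)" if "i \<in> ?I" for i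
    using local_has_deriv[OF oD p lameq[OF that] fAd[OF that]] differentiableI by blast
  have dAsame: "dderiv (\<lambda>q. tform A q (e i q) (e i q)) p v = dderiv (lam i) p v" if "i \<in> ?I" for i v
    unfolding dderiv_def using frechet_local_eq[OF oD p lameq[OF that]] fAd[OF that] differentiableI by metis
  have dAdiff: "dderiv (\<lambda>q. tform A q (e i q) (e j q)) p v = 0" if "i \<in> ?I" "j \<in> ?I" "i \<noteq> j" for i j v
    using A_diag that by (intro dderiv_const[OF oD p, of _ 0]) auto
  have cod: "cov_tensor g A (e a) (e b) (e c) p = cov_tensor g A (e b) (e a) (e c) p"
    if "a \<in> ?I" "b \<in> ?I" "c \<in> ?I" for a b c
    using A_codazzi frame_smooth that p unfolding codazzi_def by blast
  have E1: "dderiv (lam i) p (e k p) = (lam i p - lam k p) * Gm i i k"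
    if i: "i \<in> ?I" and k: "k \<in> ?I" and ik: "i \<noteq> k" for i k
  proof -
    have "cov_tensor g A (e k) (e i) (e i) p = dderiv (lam i) p (e k p) - 2 * lam i p * Gm k i i"
      unfolding cov_tensor_def dAsame[OF i] Aexp[OF i] Aexp2[OF i] Gm_def Gam_def by simp
    also have "Gm k i i = 0" using anti[OF k i i] by simp
    finally have L: "cov_tensor g A (e k) (e i) (e i) p = dderiv (lam i) p (e k p)" by simp
    have "cov_tensor g A (e i) (e k) (e i) p = - lam i p * Gm i k i - lam k p * Gm i i k"
      unfolding cov_tensor_def dAdiff[OF k i ik[symmetric]] Aexp[OF i] Aexp2[OF k] Gm_def Gam_def by simp
    also have "Gm i k i = - Gm i i k" using anti[OF i k i] by simp
    finally have R: "cov_tensor g A (e i) (e k) (e i) p = (lam i p - lam k p) * Gm i i k"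
      by (simp add: algebra_simps)
    show ?thesis using L R cod[OF k i i] by simp
  qed
  have E2: "(lam j p - lam k p) * Gm i j k = (lam i p - lam k p) * Gm j i k"
    if i: "i \<in> ?I" and j: "j \<in> ?I" and k: "k \<in> ?I" and d: "i \<noteq> j" "k \<noteq> i" "k \<noteq> j" for i j k
  proof -
    have "cov_tensor g A (e i) (e j) (e k) p = - lam k p * Gm i j k - lam j p * Gm i k j"
      unfolding cov_tensor_def dAdiff[OF j k d(3)[symmetric]] Aexp[OF k] Aexp2[OF j] Gm_def Gam_def by simp
    also have "Gm i k j = - Gm i j k" using anti[OF i k j] by simp
    finally have L: "cov_tensor g A (e i) (e j) (e k) p = (lam j p - lam k p) * Gm i j k"
      by (simp add: algebra_simps)
    have "cov_tensor g A (e j) (e i) (e k) p = - lam k p * Gm j i k - lam i p * Gm j k i"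
      unfolding cov_tensor_def dAdiff[OF i k d(2)[symmetric]] Aexp[OF k] Aexp2[OF i] Gm_def Gam_def by simp
    also have "Gm j k i = - Gm j i k" using anti[OF j k i] by simp
    finally have R: "cov_tensor g A (e j) (e i) (e k) p = (lam i p - lam k p) * Gm j i k"
      by (simp add: algebra_simps)
    show ?thesis using L R cod[OF i j k] by simp
  qed
  define s where "s = (\<lambda>k. dderiv (esym n (n - 1) lam) p (e k p))"
  have inj: "inj_on (\<lambda>i. lam i p) ?I" using distinct p by blast
  have P1: "Gm i i k = bcoef n lam i k p * s k" if i: "i \<in> ?I" and k: "k \<in> ?I" and ik: "i \<noteq> k" for i k
  proof -
    have F: "dderiv (lam i) p (e k p) * poly (pderiv (charpoly n lam p)) (lam i p)
       = (-1)^n * lam i p * s k"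
      unfolding s_def using lamd const i by (intro dlam_formula[OF oD p]) auto
    have "(\<Prod>m\<in>?I - {i}. lam i p - lam m p) \<noteq> 0"
      using inj i by (subst prod_zero_iff) (auto dest: inj_onD)
    then have nz: "poly (pderiv (charpoly n lam p)) (lam i p) \<noteq> 0" using charpoly_deriv_at[OF i, of lam p] by simp
    have nz2: "lam i p - lam k p \<noteq> 0" using inj i k ik by (auto dest: inj_onD)
    show ?thesis using F E1[OF i k ik] nz nz2 unfolding bcoef_def by (simp add: field_simps)
  qed
  have G0: "Gm k k k = 0" if "k \<in> ?I" for k using anti[OF that that that] by simp
  show "(\<forall>i\<in>?I. \<forall>k\<in>?I. i \<noteq> k \<longrightarrow>
         Gam g e i i k p = bcoef n lam i k p * dderiv (esym n (n - 1) lam) p (e k p))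
   \<and> tform g p (\<Sum>i\<in>?I. lc_conn g (e i) (e i) p)
               (\<Sum>k\<in>?I. dderiv (esym n (n - 1) lam) p (e k p) *\<^sub>R e k p)
       = (\<Sum>k\<in>?I. ucoef n lam k p * (dderiv (esym n (n - 1) lam) p (e k p))^2)
   \<and> (\<Sum>(i,j,k)\<in>{(i,j,k). i \<in> ?I \<and> j \<in> ?I \<and> k \<in> ?I \<and> i < j \<and> k \<noteq> i \<and> k \<noteq> j}.
         Gam g e i i k p * Gam g e j j k p - Gam g e i j k p * Gam g e j i k p)
       = (1/2) * (\<Sum>k\<in>?I. Gcoef n lam k p * (dderiv (esym n (n - 1) lam) p (e k p))^2)"
  proof (intro conjI)
    show "\<forall>i\<in>?I. \<forall>k\<in>?I. i \<noteq> k \<longrightarrow>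
         Gam g e i i k p = bcoef n lam i k p * dderiv (esym n (n - 1) lam) p (e k p)"
      using P1 unfolding Gm_def s_def by blast
  next
    show "tform g p (\<Sum>i\<in>?I. lc_conn g (e i) (e i) p)
               (\<Sum>k\<in>?I. dderiv (esym n (n - 1) lam) p (e k p) *\<^sub>R e k p)
       = (\<Sum>k\<in>?I. ucoef n lam k p * (dderiv (esym n (n - 1) lam) p (e k p))^2)"
    proof -
      have "tform g p (\<Sum>i\<in>?I. lc_conn g (e i) (e i) p) (\<Sum>k\<in>?I. s k *\<^sub>R e k p)
          = (\<Sum>i\<in>?I. \<Sum>k\<in>?I. s k * Gm i i k)"
      proof -
        have "tform g p (\<Sum>i\<in>?I. lc_conn g (e i) (e i) p) (\<Sum>k\<in>?I. s k *\<^sub>R e k p)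
          = (\<Sum>i\<in>?I. tform g p (lc_conn g (e i) (e i) p) (\<Sum>k\<in>?I. s k *\<^sub>R e k p))"
          by (rule tform_sum_left[OF finite_atLeastAtMost])
        also have "\<dots> = (\<Sum>i\<in>?I. \<Sum>k\<in>?I. tform g p (lc_conn g (e i) (e i) p) (s k *\<^sub>R e k p))"
          by (rule sum.cong[OF refl], rule tform_sum_right[OF finite_atLeastAtMost])
        also have "\<dots> = (\<Sum>i\<in>?I. \<Sum>k\<in>?I. s k * Gm i i k)"
          by (simp only: tform_scale_right Gm_def Gam_def)
        finally show ?thesis .
      qed
      also have "\<dots> = (\<Sum>k\<in>?I. s k * (\<Sum>i\<in>?I. Gm i i k))"
        using sum.swap[of "\<lambda>i k. s k * Gm i i k" ?I ?I] by (simp add: sum_distrib_left)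
      also have "\<dots> = (\<Sum>k\<in>?I. ucoef n lam k p * (s k)^2)"
      proof (rule sum.cong[OF refl])
        fix k assume k: "k \<in> ?I"
        have "(\<Sum>i\<in>?I. Gm i i k) = Gm k k k + (\<Sum>i\<in>?I - {k}. Gm i i k)"
          using k by (simp add: sum.remove)
        also have "\<dots> = (\<Sum>i\<in>?I - {k}. bcoef n lam i k p * s k)"
          using G0[OF k] P1 k by (auto intro!: sum.cong)
        also have "\<dots> = ucoef n lam k p * s k"
          unfolding ucoef_def by (simp add: sum_distrib_right)
        finally show "s k * (\<Sum>i\<in>?I. Gm i i k) = ucoef n lam k p * (s k)^2"
          by (simp add: power2_eq_square)
      qed
      finally show ?thesis unfolding s_def .
    qed
  next
    show "(\<Sum>(i,j,k)\<in>{(i,j,k). i \<in> ?I \<and> j \<in> ?I \<and> k \<in> ?I \<and> i < j \<and> k \<noteq> i \<and> k \<noteq> j}.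
         Gam g e i i k p * Gam g e j j k p - Gam g e i j k p * Gam g e j i k p)
       = (1/2) * (\<Sum>k\<in>?I. Gcoef n lam k p * (dderiv (esym n (n - 1) lam) p (e k p))^2)"
    proof -
      have TT: "{(i,j,k). i \<in> ?I \<and> j \<in> ?I \<and> k \<in> ?I \<and> i < j \<and> k \<noteq> i \<and> k \<noteq> j} = Tlt n"
        unfolding Tlt_def by simp
      define f where "f = (\<lambda>i j k. bcoef n lam i k p * bcoef n lam j k p * (s k)^2)"
      have S1: "(\<Sum>(i,j,k)\<in>Tlt n. Gm i i k * Gm j j k - Gm i j k * Gm j i k)
          = (\<Sum>(i,j,k)\<in>Tlt n. f i j k - Gm i j k * Gm j i k)"
      proof (rule sum.cong[OF refl])
        fix x assume "x \<in> Tlt n"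
        then obtain i j k where x: "x = (i,j,k)" "i \<in> ?I" "j \<in> ?I" "k \<in> ?I" "k \<noteq> i" "k \<noteq> j"
          unfolding Tlt_def by auto
        show "(case x of (i,j,k) \<Rightarrow> Gm i i k * Gm j j k - Gm i j k * Gm j i k)
            = (case x of (i,j,k) \<Rightarrow> f i j k - Gm i j k * Gm j i k)"
          using x P1[of i k] P1[of j k] unfolding f_def by (simp add: power2_eq_square algebra_simps)
      qed
      have S2: "(\<Sum>(i,j,k)\<in>Tlt n. f i j k - Gm i j k * Gm j i k)
          = (\<Sum>(i,j,k)\<in>Tlt n. f i j k) - (\<Sum>(i,j,k)\<in>Tlt n. Gm i j k * Gm j i k)"
        by (simp add: split_def sum_subtractf)
      have S3: "(\<Sum>(i,j,k)\<in>Tlt n. Gm i j k * Gm j i k) = 0"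
        by (rule cross_zero[OF inj E2 anti]) auto
      have S4: "(\<Sum>(i,j,k)\<in>Tlt n. f i j k) = (1/2) * (\<Sum>(i,j,k)\<in>Td n. f i j k)"
        using split_sym[of f n] unfolding f_def by (simp add: mult.commute)
      have S5: "(\<Sum>(i,j,k)\<in>Td n. f i j k) = (\<Sum>k\<in>?I. Gcoef n lam k p * (s k)^2)"
      proof -
        define P where "P = (\<lambda>k. {(i,j). i \<in> ?I \<and> j \<in> ?I \<and> i \<noteq> j \<and> i \<noteq> k \<and> j \<noteq> k})"
        have fP: "finite (P k)" for k
        proof -
          have "P k \<subseteq> ?I \<times> ?I" unfolding P_def by auto
          then show ?thesis by (rule finite_subset) auto
        qed
        have "(\<Sum>k\<in>?I. Gcoef n lam k p * (s k)^2) = (\<Sum>k\<in>?I. \<Sum>(i,j)\<in>P k. f i j k)"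
          unfolding Gcoef_def P_def f_def by (simp add: sum_distrib_right split_def)
        also have "\<dots> = (\<Sum>(k,ij)\<in>Sigma ?I P. f (fst ij) (snd ij) k)"
          by (subst sum.Sigma) (auto simp: fP split_def)
        also have "\<dots> = (\<Sum>(i,j,k)\<in>Td n. f i j k)"
          by (rule sum.reindex_bij_witness[where i="\<lambda>(i,j,k). (k,(i,j))" and j="\<lambda>(k,(i,j)). (i,j,k)"])
             (auto simp: Td_def P_def)
        finally show ?thesis by (rule sym)
      qed
      have "(\<Sum>(i,j,k)\<in>Tlt n. Gm i i k * Gm j j k - Gm i j k * Gm j i k)
          = (1/2) * (\<Sum>k\<in>?I. Gcoef n lam k p * (s k)^2)"
        unfolding S1 S2 S3 S4 S5 by simp
      then show ?thesis unfolding TT Gm_def s_def .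
    qed
  qed
qed

end
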